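(* For every integer $n$ with $n \equiv 1 \pmod{3}$ and $4 \le n \le 52$, there exists a permutation $\sigma$ of $\mathbb{Z}_n = \{0,\dots,n-1\}$ such that $f_\sigma(\delta) \in \{a, a+2\}$ for every $\delta \in \{1,\dots,n-1\}$, where $a = (n(n+1)-2)/3$.
   Context: For a permutation $\sigma$ of $\mathbb{Z}_n$, the shift correlation at shift $\delta$ is $f_\sigma(\delta) = \sum_{j=0}^{n-1} \lvert \sigma((j+\delta) \bmod n) - \sigma(j) \rvert$, where $\sigma$ takes values in $\{0,\dots,n-1\}$ and the absolute value is of ordinary integers. Such a permutation is called a near-perfect permutation. *)

theory Defs
  imports Main
begin

definition shift_corr :: "nat \<Rightarrow> (nat \<Rightarrow> nat) \<Rightarrow> nat \<Rightarrow> int" where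
  "shift_corr n \<sigma> \<delta> = (\<Sum>j<n. \<bar>int (\<sigma> ((j + \<delta>) mod n)) - int (\<sigma> j)\<bar>)"

end

theory Submission
  imports Defs
begin

definition nd :: "nat \<Rightarrow> nat \<Rightarrow> nat" where
  "nd u v = (u - v) + (v - u)"

definition scl :: "nat list \<Rightarrow> nat list \<Rightarrow> nat" where
  "scl ys xs = sum_list (map2 nd ys xs)"

fun chk :: "nat list \<Rightarrow> nat list \<Rightarrow> nat list \<Rightarrow> nat \<Rightarrow> bool" where
  "chk xs ys [] a = True"
| "chk xs ys (c # cs) a = ((scl (rotate1 ys) xs = a \<or> scl (rotate1 ys) xs = a + 2) \<and> chk xs (rotate1 ys) cs a)"

lemma chk_rot:
  "chk xs ys cs a \<Longrightarrow> ys = rotate m xs \<Longrightarrow> i \<in> {1..length cs} \<Longrightarrow>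
     scl (rotate (m + i) xs) xs = a \<or> scl (rotate (m + i) xs) xs = a + 2"
proof (induction cs arbitrary: ys m i)
  case Nil
  then show ?case by simp
next
  case (Cons c cs)
  show ?case
  proof (cases "i = 1")
    case True
    then show ?thesis using Cons.prems by simp
  next
    case False
    have "chk xs (rotate (Suc m) xs) cs a" using Cons.prems by simp
    obtain k where k: "i = Suc k" using Cons.prems(3) by (cases i) auto
    have "k \<in> {1..length cs}" using k False Cons.prems(3) by auto
    from Cons.IH[OF \<open>chk xs (rotate (Suc m) xs) cs a\<close> refl this]
    show ?thesis using k by simp
  qed
qed

lemma nd_int: "int (nd u v) = \<bar>int u - int v\<bar>"
  unfolding nd_def by linarith

lemma scl_eq:
  assumes "length xs = n"
  shows "shift_corr n ((!) xs) d = int (scl (rotate d xs) xs)"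
proof -
  have "scl (rotate d xs) xs = (\<Sum>j = 0..<n. nd (rotate d xs ! j) (xs ! j))"
    unfolding scl_def using assms by (simp add: sum_list_sum_nth)
  also have "\<dots> = (\<Sum>j = 0..<n. nd (xs ! ((j + d) mod n)) (xs ! j))"
    using assms by (intro sum.cong refl) (simp add: nth_rotate add.commute)
  finally have "int (scl (rotate d xs) xs) = (\<Sum>j = 0..<n. int (nd (xs ! ((j + d) mod n)) (xs ! j)))"
    by simp
  also have "\<dots> = shift_corr n ((!) xs) d"
    unfolding shift_corr_def nd_int atLeast0LessThan ..
  finally show ?thesis by simp
qed

lemma main_gen:
  assumes "length xs = n" "distinct xs" "\<forall>x\<in>set xs. x < n" "chk xs xs (tl xs) a"
    and "n > 0"
  shows "\<exists>\<sigma>. bij_betw \<sigma> {0..<n} {0..<n} \<and>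
           (\<forall>\<delta>\<in>{1..<n}. shift_corr n \<sigma> \<delta> \<in> {int a, int a + 2})"
proof (intro exI conjI ballI)
  have "set xs \<subseteq> {0..<n}" using assms(3) by auto
  moreover have "card (set xs) = card {0..<n}" using assms(1,2) by (simp add: distinct_card)
  ultimately have "set xs = {0..<n}" by (intro card_subset_eq) auto
  moreover have "{0..<n} = {..<length xs}" using assms(1) by auto
  ultimately show "bij_betw ((!) xs) {0..<n} {0..<n}"
    using assms(2) by (intro bij_betw_nth) auto
next
  fix d assume d: "d \<in> {1..<n}"
  have "scl (rotate (0 + d) xs) xs = a \<or> scl (rotate (0 + d) xs) xs = a + 2"
  proof -
    have "d \<in> {1..length (tl xs)}" using d assms(1) by auto
    from chk_rot[OF assms(4) _ this, of 0] show ?thesis by simp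
  qed
  then show "shift_corr n ((!) xs) d \<in> {int a, int a + 2}"
    using scl_eq[OF assms(1)] by auto
qed

lemma inst4: "\<exists>\<sigma>. bij_betw \<sigma> {0..<4::nat} {0..<4} \<and>
           (\<forall>\<delta>\<in>{1..<4::nat}. shift_corr 4 \<sigma> \<delta> \<in> {int 6, int 6 + 2})"
  by (rule main_gen[of "[0, 2, 3, 1]"]) (simp_all add: scl_def nd_def)

lemma inst7: "\<exists>\<sigma>. bij_betw \<sigma> {0..<7::nat} {0..<7} \<and>
           (\<forall>\<delta>\<in>{1..<7::nat}. shift_corr 7 \<sigma> \<delta> \<in> {int 18, int 18 + 2})"
  by (rule main_gen[of "[3, 6, 5, 2, 0, 4, 1]"]) (simp_all add: scl_def nd_def)

lemma inst10: "\<exists>\<sigma>. bij_betw \<sigma> {0..<10::nat} {0..<10} \<and>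
           (\<forall>\<delta>\<in>{1..<10::nat}. shift_corr 10 \<sigma> \<delta> \<in> {int 36, int 36 + 2})"
  by (rule main_gen[of "[5, 2, 3, 9, 7, 6, 1, 8, 0, 4]"]) (simp_all add: scl_def nd_def)

lemma inst13: "\<exists>\<sigma>. bij_betw \<sigma> {0..<13::nat} {0..<13} \<and>
           (\<forall>\<delta>\<in>{1..<13::nat}. shift_corr 13 \<sigma> \<delta> \<in> {int 60, int 60 + 2})"
  by (rule main_gen[of "[4, 3, 11, 8, 6, 9, 1, 12, 10, 5, 2, 7, 0]"]) (simp_all add: scl_def nd_def)

lemma inst16: "\<exists>\<sigma>. bij_betw \<sigma> {0..<16::nat} {0..<16} \<and>
           (\<forall>\<delta>\<in>{1..<16::nat}. shift_corr 16 \<sigma> \<delta> \<in> {int 90, int 90 + 2})"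
  by (rule main_gen[of "[2, 15, 12, 13, 11, 0, 6, 4, 14, 3, 5, 7, 10, 1, 9, 8]"]) (simp_all add: scl_def nd_def)

lemma inst19: "\<exists>\<sigma>. bij_betw \<sigma> {0..<19::nat} {0..<19} \<and>
           (\<forall>\<delta>\<in>{1..<19::nat}. shift_corr 19 \<sigma> \<delta> \<in> {int 126, int 126 + 2})"
  by (rule main_gen[of "[5, 1, 9, 12, 3, 4, 13, 7, 15, 10, 0, 11, 6, 16, 17, 18, 2, 14, 8]"]) (simp_all add: scl_def nd_def)

lemma inst22: "\<exists>\<sigma>. bij_betw \<sigma> {0..<22::nat} {0..<22} \<and>
           (\<forall>\<delta>\<in>{1..<22::nat}. shift_corr 22 \<sigma> \<delta> \<in> {int 168, int 168 + 2})"
  by (rule main_gen[of "[3, 8, 1, 12, 14, 18, 21, 0, 17, 20, 11, 2, 15, 9, 10, 7, 5, 4, 16, 6, 19, 13]"]) (simp_all add: scl_def nd_def)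

lemma inst25: "\<exists>\<sigma>. bij_betw \<sigma> {0..<25::nat} {0..<25} \<and>
           (\<forall>\<delta>\<in>{1..<25::nat}. shift_corr 25 \<sigma> \<delta> \<in> {int 216, int 216 + 2})"
  by (rule main_gen[of "[11, 20, 6, 21, 23, 19, 2, 22, 1, 7, 9, 3, 14, 12, 5, 17, 15, 16, 10, 4, 8, 18, 24, 13, 0]"]) (simp_all add: scl_def nd_def)

lemma inst28: "\<exists>\<sigma>. bij_betw \<sigma> {0..<28::nat} {0..<28} \<and>
           (\<forall>\<delta>\<in>{1..<28::nat}. shift_corr 28 \<sigma> \<delta> \<in> {int 270, int 270 + 2})"
  by (rule main_gen[of "[24, 9, 25, 3, 1, 27, 6, 0, 22, 20, 26, 21, 16, 10, 13, 11, 7, 23, 18, 12, 2, 5, 17, 15, 14, 8, 19, 4]"]) (simp_all add: scl_def nd_def)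

lemma inst31: "\<exists>\<sigma>. bij_betw \<sigma> {0..<31::nat} {0..<31} \<and>
           (\<forall>\<delta>\<in>{1..<31::nat}. shift_corr 31 \<sigma> \<delta> \<in> {int 330, int 330 + 2})"
  by (rule main_gen[of "[1, 0, 2, 24, 16, 30, 25, 8, 28, 13, 11, 12, 26, 7, 21, 15, 5, 19, 22, 23, 20, 4, 18, 6, 10, 17, 27, 14, 3, 9, 29]"]) (simp_all add: scl_def nd_def)

lemma inst34: "\<exists>\<sigma>. bij_betw \<sigma> {0..<34::nat} {0..<34} \<and>
           (\<forall>\<delta>\<in>{1..<34::nat}. shift_corr 34 \<sigma> \<delta> \<in> {int 396, int 396 + 2})"
  by (rule main_gen[of "[19, 18, 10, 29, 5, 6, 16, 17, 2, 0, 13, 32, 14, 12, 9, 33, 15, 21, 25, 1, 3, 27, 7, 31, 30, 11, 23, 4, 22, 8, 20, 28, 24, 26]"]) (simp_all add: scl_def nd_def)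

lemma inst37: "\<exists>\<sigma>. bij_betw \<sigma> {0..<37::nat} {0..<37} \<and>
           (\<forall>\<delta>\<in>{1..<37::nat}. shift_corr 37 \<sigma> \<delta> \<in> {int 468, int 468 + 2})"
  by (rule main_gen[of "[9, 36, 17, 34, 15, 18, 16, 11, 1, 27, 29, 26, 23, 7, 33, 32, 19, 24, 2, 4, 28, 6, 3, 13, 31, 0, 5, 30, 10, 21, 20, 22, 35, 12, 14, 8, 25]"]) (simp_all add: scl_def nd_def)

lemma inst40: "\<exists>\<sigma>. bij_betw \<sigma> {0..<40::nat} {0..<40} \<and>
           (\<forall>\<delta>\<in>{1..<40::nat}. shift_corr 40 \<sigma> \<delta> \<in> {int 546, int 546 + 2})"
  by (rule main_gen[of "[5, 29, 22, 36, 26, 19, 8, 16, 24, 4, 38, 21, 18, 25, 10, 11, 28, 39, 32, 9, 34, 35, 0, 33, 15, 17, 7, 27, 37, 30, 14, 3, 6, 20, 2, 1, 13, 23, 12, 31]"]) (simp_all add: scl_def nd_def)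

lemma inst43: "\<exists>\<sigma>. bij_betw \<sigma> {0..<43::nat} {0..<43} \<and>
           (\<forall>\<delta>\<in>{1..<43::nat}. shift_corr 43 \<sigma> \<delta> \<in> {int 630, int 630 + 2})"
  by (rule main_gen[of "[28, 0, 13, 4, 2, 22, 10, 14, 20, 3, 18, 40, 39, 35, 5, 27, 17, 9, 25, 29, 37, 7, 42, 16, 41, 12, 21, 30, 31, 1, 8, 38, 33, 15, 34, 6, 19, 36, 32, 11, 24, 26, 23]"]) (simp_all add: scl_def nd_def)

lemma inst46: "\<exists>\<sigma>. bij_betw \<sigma> {0..<46::nat} {0..<46} \<and>
           (\<forall>\<delta>\<in>{1..<46::nat}. shift_corr 46 \<sigma> \<delta> \<in> {int 720, int 720 + 2})"
  by (rule main_gen[of "[34, 20, 26, 7, 43, 42, 23, 41, 17, 25, 11, 15, 14, 8, 39, 36, 38, 3, 29, 27, 37, 40, 33, 12, 31, 9, 35, 22, 0, 4, 45, 5, 24, 28, 1, 19, 6, 13, 21, 32, 18, 16, 30, 44, 2, 10]"]) (simp_all add: scl_def nd_def)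

lemma inst49: "\<exists>\<sigma>. bij_betw \<sigma> {0..<49::nat} {0..<49} \<and>
           (\<forall>\<delta>\<in>{1..<49::nat}. shift_corr 49 \<sigma> \<delta> \<in> {int 816, int 816 + 2})"
  by (rule main_gen[of "[35, 41, 8, 11, 32, 23, 1, 37, 10, 15, 42, 0, 44, 5, 3, 48, 46, 26, 22, 47, 43, 13, 33, 4, 6, 2, 27, 28, 14, 17, 24, 21, 45, 31, 29, 25, 20, 16, 7, 38, 36, 39, 18, 40, 12, 34, 9, 30, 19]"]) (simp_all add: scl_def nd_def)

lemma inst52: "\<exists>\<sigma>. bij_betw \<sigma> {0..<52::nat} {0..<52} \<and>
           (\<forall>\<delta>\<in>{1..<52::nat}. shift_corr 52 \<sigma> \<delta> \<in> {int 918, int 918 + 2})"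
  by (rule main_gen[of "[20, 47, 51, 6, 29, 37, 10, 15, 36, 28, 44, 14, 22, 50, 24, 38, 48, 33, 23, 17, 19, 3, 2, 7, 8, 12, 46, 41, 13, 1, 32, 9, 49, 26, 18, 0, 43, 27, 25, 21, 31, 16, 45, 5, 42, 39, 35, 30, 11, 40, 4, 34]"]) (simp_all add: scl_def nd_def)

theorem theorem6:
  fixes n :: nat
  assumes "n mod 3 = 1" and "4 \<le> n" and "n \<le> 52"
  shows "\<exists>\<sigma>. bij_betw \<sigma> {0..<n} {0..<n} \<and>
           (\<forall>\<delta>\<in>{1..<n}. shift_corr n \<sigma> \<delta> \<in>
              {int ((n * (n + 1) - 2) div 3), int ((n * (n + 1) - 2) div 3) + 2})"
proof -
  have "n = 4 \<or> n = 7 \<or> n = 10 \<or> n = 13 \<or> n = 16 \<or> n = 19 \<or> n = 22 \<or> n = 25 \<or> n = 28 \<or> n = 31 \<or> n = 34 \<or> n = 37 \<or> n = 40 \<or> n = 43 \<or> n = 46 \<or> n = 49 \<or> n = 52" using assms by presburger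
  then show ?thesis
    using inst4 inst7 inst10 inst13 inst16 inst19 inst22 inst25 inst28 inst31 inst34 inst37 inst40 inst43 inst46 inst49 inst52 by (elim disjE) simp_all
qed

end
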